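(* Fix $t>0$. The transformation $\mathcal{T}$ on $C([0,t];\mathbb{R})$ has the following properties. (i) For every $\phi\in C([0,t];\mathbb{R})$, $\mathcal{T}(\phi)(t)=-\phi_t$. (ii) For every $\phi\in C([0,t];\mathbb{R})$, \[\frac{1}{A_s(\mathcal{T}(\phi))}=\frac{1}{A_s(\phi)}+\frac{e^{2\phi_t}-1}{A_t(\phi)},\quad 0<s\le t;\] in particular $A_t(\mathcal{T}(\phi))=e^{-2\phi_t}A_t(\phi)$. (iii) $Z_s(\mathcal{T}(\phi))=Z_s(\phi)$ for all $0\le s\le t$ and all $\phi$, i.e. $Z\circ\mathcal{T}=Z$. (iv) For every $z\in\mathbb{R}$, $\mathcal{T}\circ\mathbb{T}_z\circ\mathcal{T}\circ\mathbb{T}_z=\mathrm{Id}$; in particular $\mathcal{T}\circ\mathcal{T}=\mathrm{Id}$. Moreover $(\mathcal{T}\circ\mathbb{T}_z)(\phi)=\mathbb{T}_{2\phi_t-z}(\phi)$ for all $\phi\in C([0,t];\mathbb{R})$ and $z\in\mathbb{R}$. (v) For every $\phi\in C([0,t];\mathbb{R})$ with $\phi_0=0$, $(R\circ\mathcal{T})(\phi)=(\mathcal{T}\circ R)(\phi)$.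
   Context: For $\phi\in C([0,t];\mathbb{R})$ let $A_s(\phi)=\int_0^s e^{2\phi_u}\,du$ and $Z_s(\phi)=e^{-\phi_s}A_s(\phi)$. For $z\in\mathbb{R}$, $\mathbb{T}_z(\phi)(s)=\phi_s-\log\{1+\frac{A_s(\phi)}{A_t(\phi)}(e^z-1)\}$, $0\le s\le t$; $\mathcal{T}(\phi)(s)=\mathbb{T}_{2\phi_t}(\phi)(s)$; $R(\phi)(s)=\phi_{t-s}-\phi_t$, $0\le s\le t$ (time reversal); $\mathrm{Id}$ is the identity map on $C([0,t];\mathbb{R})$. *)

theory Defs
  imports "HOL-Analysis.Analysis"
begin

text \<open>Paths phi in C([0,t];R) are represented as functions real => real that are
continuous on {0..t}; only their values on [0,t] matter.\<close>

definition Aint :: "(real \<Rightarrow> real) \<Rightarrow> real \<Rightarrow> real" where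
  "Aint phi s = integral {0..s} (\<lambda>u. exp (2 * phi u))"

definition Zf :: "(real \<Rightarrow> real) \<Rightarrow> real \<Rightarrow> real" where
  "Zf phi s = exp (- phi s) * Aint phi s"

definition TTz :: "real \<Rightarrow> real \<Rightarrow> (real \<Rightarrow> real) \<Rightarrow> (real \<Rightarrow> real)" where
  "TTz t z phi = (\<lambda>s. phi s - ln (1 + Aint phi s / Aint phi t * (exp z - 1)))"

definition Tcal :: "real \<Rightarrow> (real \<Rightarrow> real) \<Rightarrow> (real \<Rightarrow> real)" where
  "Tcal t phi = TTz t (2 * phi t) phi"

definition Rrev :: "real \<Rightarrow> (real \<Rightarrow> real) \<Rightarrow> (real \<Rightarrow> real)" where
  "Rrev t phi = (\<lambda>s. phi (t - s) - phi t)"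

end

theory Submission imports Defs begin

lemma Aint_deriv:
  assumes "continuous_on {0..t} phi" "x \<in> {0..t}"
  shows "(Aint phi has_real_derivative exp (2 * phi x)) (at x within {0..t})"
proof -
  have c: "continuous_on {0..t} (\<lambda>u. exp (2 * phi u))"
    by (intro continuous_intros assms)
  show ?thesis
    unfolding has_real_derivative_iff_has_vector_derivative Aint_def[abs_def]
    using integral_has_vector_derivative[OF c assms(2)] by simp
qed

lemma Aint0: "Aint phi 0 = 0" by (simp add: Aint_def)

lemma Aint_strict:
  assumes "continuous_on {0..t} phi" "0 \<le> a" "a < b" "b \<le> t"
  shows "Aint phi a < Aint phi b"
proof -
  have "\<exists>x\<in>{a<..<b}. Aint phi b - Aint phi a = (\<lambda>h. exp (2 * phi x) * h) (b - a)"
  proof (rule mvt_simple[OF assms(3)])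
    fix x assume "a \<le> x" "x \<le> b"
    hence "(Aint phi has_real_derivative exp (2 * phi x)) (at x within {0..t})"
      using Aint_deriv[OF assms(1)] assms by auto
    hence "(Aint phi has_real_derivative exp (2 * phi x)) (at x within {a..b})"
      by (rule DERIV_subset) (use assms in auto)
    thus "(Aint phi has_derivative (\<lambda>h. exp (2 * phi x) * h)) (at x within {a..b})"
      by (simp add: has_field_derivative_def)
  qed
  then obtain x where "Aint phi b - Aint phi a = exp (2 * phi x) * (b - a)" by auto
  moreover have "exp (2 * phi x) * (b - a) > 0" using assms by simp
  ultimately show ?thesis by simp
qed

lemma Aint_mono:
  assumes "continuous_on {0..t} phi" "0 \<le> a" "a \<le> b" "b \<le> t"
  shows "Aint phi a \<le> Aint phi b"
  using Aint_strict[OF assms(1,2) _ assms(4)] assms(3) by (cases "a = b") auto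

lemma Aint_ftc:
  assumes "\<And>x. x \<in> {0..t} \<Longrightarrow> (G has_real_derivative g x) (at x within {0..t})"
    "G 0 = 0" "s \<in> {0..t}"
  shows "integral {0..s} g = G s"
proof -
  have "(g has_integral (G s - G 0)) {0..s}"
  proof (rule fundamental_theorem_of_calculus)
    show "0 \<le> s" using assms by auto
    fix x assume "x \<in> {0..s}"
    hence "(G has_real_derivative g x) (at x within {0..t})" using assms by auto
    hence "(G has_real_derivative g x) (at x within {0..s})"
      by (rule DERIV_subset) (use assms in auto)
    thus "(G has_vector_derivative g x) (at x within {0..s})"
      by (simp add: has_real_derivative_iff_has_vector_derivative)
  qed
  thus ?thesis using assms(2) by (simp add: integral_unique)
qed


lemma Aint_cont:
  assumes "continuous_on {0..t} phi"
  shows "continuous_on {0..t} (Aint phi)"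
  unfolding continuous_on_eq_continuous_within
  using Aint_deriv[OF assms] DERIV_continuous by blast

lemma Aint_t_pos:
  assumes "continuous_on {0..t} phi" "t > 0"
  shows "Aint phi t > 0"
  using Aint_strict[OF assms(1), of 0 t] assms by (simp add: Aint0)

lemma Aint_nonneg:
  assumes "continuous_on {0..t} phi" "s \<in> {0..t}"
  shows "0 \<le> Aint phi s" "Aint phi s \<le> Aint phi t"
  using Aint_mono[OF assms(1), of 0 s] Aint_mono[OF assms(1), of s t] assms by (auto simp: Aint0)

lemma L_pos:
  assumes "continuous_on {0..t} phi" "t > 0" "s \<in> {0..t}"
  shows "1 + Aint phi s / Aint phi t * (exp z - 1) > 0"
proof -
  define r where "r = Aint phi s / Aint phi t"
  have r: "0 \<le> r" "r \<le> 1"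
    using Aint_nonneg[OF assms(1,3)] Aint_t_pos[OF assms(1,2)] by (auto simp: r_def)
  have e: "1 + r * (exp z - 1) = (1 - r) + r * exp z" by algebra
  have "(1 - r) + r * exp z > 0"
  proof (cases "r = 0")
    case False
    hence "r * exp z > 0" using r by simp
    thus ?thesis using r by linarith
  qed simp
  thus ?thesis using e r_def by simp
qed

lemma TTz_Aint:
  assumes "continuous_on {0..t} phi" "t > 0" "s \<in> {0..t}"
  shows "Aint (TTz t z phi) s = Aint phi s / (1 + Aint phi s / Aint phi t * (exp z - 1))"
proof -
  define a where "a = Aint phi t"
  define k where "k = (exp z - 1) / a"
  have a: "a > 0" using Aint_t_pos[OF assms(1,2)] a_def by simp
  have Lk: "\<And>x. 1 + Aint phi x / Aint phi t * (exp z - 1) = 1 + Aint phi x * k"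
    by (simp add: k_def a_def)
  have Lp: "\<And>x. x \<in> {0..t} \<Longrightarrow> 1 + Aint phi x * k > 0"
    using L_pos[OF assms(1,2)] Lk by metis
  have "integral {0..s} (\<lambda>u. exp (2 * TTz t z phi u)) = (\<lambda>x. Aint phi x / (1 + Aint phi x * k)) s"
  proof (rule Aint_ftc[OF _ _ assms(3)])
    show "Aint phi 0 / (1 + Aint phi 0 * k) = 0" by (simp add: Aint0)
    fix x assume x: "x \<in> {0..t}"
    have L: "1 + Aint phi x * k > 0" using Lp[OF x] .
    have "((\<lambda>x. Aint phi x / (1 + Aint phi x * k)) has_real_derivative
       (exp (2 * phi x) * (1 + Aint phi x * k) - Aint phi x * (exp (2 * phi x) * k)) / (1 + Aint phi x * k)^2)
       (at x within {0..t})"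
      using L by (auto intro!: derivative_eq_intros Aint_deriv[OF assms(1) x] simp: power2_eq_square)
    moreover have "(exp (2 * phi x) * (1 + Aint phi x * k) - Aint phi x * (exp (2 * phi x) * k)) / (1 + Aint phi x * k)^2
        = exp (2 * TTz t z phi x)"
    proof -
      have "exp (2 * TTz t z phi x) = exp (2 * phi x - 2 * ln (1 + Aint phi x * k))"
        unfolding TTz_def Lk by (simp add: algebra_simps)
      also have "\<dots> = exp (2 * phi x) / exp (ln (1 + Aint phi x * k)) ^ 2"
        by (simp add: exp_diff exp_of_nat_mult[symmetric] mult.commute)
      also have "\<dots> = exp (2 * phi x) / (1 + Aint phi x * k) ^ 2" using L by simp
      finally show ?thesis by (simp add: algebra_simps)
    qed
    ultimately show "((\<lambda>x. Aint phi x / (1 + Aint phi x * k)) has_real_derivative exp (2 * TTz t z phi x)) (at x within {0..t})"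
      by simp
  qed
  thus ?thesis unfolding Aint_def[of "TTz t z phi"] using Lk by simp
qed

lemma TTz_cont:
  assumes "continuous_on {0..t} phi" "t > 0"
  shows "continuous_on {0..t} (TTz t z phi)"
  unfolding TTz_def
  using L_pos[OF assms] Aint_cont[OF assms(1)] Aint_t_pos[OF assms]
  by (intro continuous_intros assms) (auto, metis less_irrefl mult.commute times_divide_eq_right)

lemma TTz_at_t:
  assumes "continuous_on {0..t} phi" "t > 0"
  shows "TTz t z phi t = phi t - z"
  using Aint_t_pos[OF assms] by (simp add: TTz_def)

lemma TTz_zero: "TTz t 0 phi s = phi s"
  by (simp add: TTz_def)

lemma Aint_cong:
  assumes "\<forall>x\<in>{0..t}. f x = g x" "s \<in> {0..t}"
  shows "Aint f s = Aint g s"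
  unfolding Aint_def using assms by (intro integral_cong) auto

lemma TTz_cong:
  assumes "\<forall>x\<in>{0..t}. f x = g x" "s \<in> {0..t}"
  shows "TTz t w f s = TTz t w g s"
  using Aint_cong[OF assms(1), of s] Aint_cong[OF assms(1), of t] assms by (simp add: TTz_def)

lemma TTz_comp:
  assumes "continuous_on {0..t} phi" "t > 0" "s \<in> {0..t}"
  shows "TTz t w (TTz t z phi) s = TTz t (z + w) phi s"
proof -
  define a where "a = Aint phi t"
  define r where "r = Aint phi s / a"
  have a: "a > 0" using Aint_t_pos[OF assms(1,2)] a_def by simp
  have L1: "1 + r * (exp z - 1) > 0" using L_pos[OF assms] by (simp add: r_def a_def)
  have At: "Aint (TTz t z phi) t = a / exp z"
    using TTz_Aint[OF assms(1,2), of t z] a assms(2) by (simp add: a_def)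
  have As: "Aint (TTz t z phi) s = r * a / (1 + r * (exp z - 1))"
    using TTz_Aint[OF assms(1,2,3), of z] a by (simp add: a_def r_def)
  have q: "Aint (TTz t z phi) s / Aint (TTz t z phi) t = r * exp z / (1 + r * (exp z - 1))"
  proof -
    have "\<And>L e::real. L \<noteq> 0 \<Longrightarrow> e \<noteq> 0 \<Longrightarrow> (r * a / L) / (a / e) = r * e / L"
      using a by (simp add: field_simps)
    thus ?thesis unfolding At As using L1 by simp
  qed
  have L2: "1 + r * exp z / (1 + r * (exp z - 1)) * (exp w - 1) = (1 + r * (exp (z + w) - 1)) / (1 + r * (exp z - 1))"
    using L1 by (simp add: field_simps exp_add)
  have L3: "1 + r * (exp (z + w) - 1) > 0" using L_pos[OF assms, of "z + w"] by (simp add: r_def a_def)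
  show ?thesis
    unfolding TTz_def[of t w] q L2 using L1 L3
    by (simp add: TTz_def ln_div r_def a_def)
qed


lemma Zf_TTz:
  assumes "continuous_on {0..t} phi" "t > 0" "s \<in> {0..t}"
  shows "Zf (TTz t z phi) s = Zf phi s"
proof -
  define L where "L = 1 + Aint phi s / Aint phi t * (exp z - 1)"
  have L: "L > 0" using L_pos[OF assms] L_def by simp
  have "exp (- TTz t z phi s) = exp (- phi s) * L"
  proof -
    have "exp (- TTz t z phi s) = exp (- phi s) * exp (ln L)"
      unfolding TTz_def L_def by (simp add: exp_diff exp_minus field_simps)
    thus ?thesis using L by simp
  qed
  thus ?thesis using TTz_Aint[OF assms, of z] L unfolding Zf_def L_def[symmetric] by simp
qed

lemma Rrev_cont:
  assumes "continuous_on {0..t} phi"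
  shows "continuous_on {0..t} (Rrev t phi)"
proof -
  have "continuous_on {0..t} (\<lambda>s. phi (t - s))"
    by (rule continuous_on_compose2[OF assms]) (auto intro!: continuous_intros)
  thus ?thesis unfolding Rrev_def by (intro continuous_intros)
qed

lemma Rrev_Aint:
  assumes "continuous_on {0..t} phi" "t > 0" "s \<in> {0..t}"
  shows "Aint (Rrev t phi) s = exp (- 2 * phi t) * (Aint phi t - Aint phi (t - s))"
proof -
  have "integral {0..s} (\<lambda>u. exp (2 * Rrev t phi u)) = (\<lambda>x. exp (- 2 * phi t) * (Aint phi t - Aint phi (t - x))) s"
  proof (rule Aint_ftc[OF _ _ assms(3)])
    show "exp (- 2 * phi t) * (Aint phi t - Aint phi (t - 0)) = 0" by simp
    fix x assume x: "x \<in> {0..t}"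
    have im: "(\<lambda>x. t - x) ` {0..t} = {0..t}"
      by (auto simp: image_iff intro!: bexI[where x="t - _"])
    have d1: "(Aint phi has_real_derivative exp (2 * phi (t - x))) (at ((\<lambda>x. t - x) x) within ((\<lambda>x. t - x) ` {0..t}))"
      unfolding im using Aint_deriv[OF assms(1)] x by auto
    have d2: "((\<lambda>x. t - x) has_real_derivative -1) (at x within {0..t})"
      by (auto intro!: derivative_eq_intros)
    have "((\<lambda>x. Aint phi (t - x)) has_real_derivative exp (2 * phi (t - x)) * -1) (at x within {0..t})"
      using DERIV_image_chain[OF d1 d2] by (simp add: o_def)
    hence "((\<lambda>x. exp (- 2 * phi t) * (Aint phi t - Aint phi (t - x))) has_real_derivative
        exp (- 2 * phi t) * (0 - exp (2 * phi (t - x)) * -1)) (at x within {0..t})"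
      by (auto intro!: derivative_eq_intros)
    moreover have "exp (- 2 * phi t) * (0 - exp (2 * phi (t - x)) * -1) = exp (2 * Rrev t phi x)"
      by (simp add: Rrev_def exp_add[symmetric] algebra_simps)
    ultimately show "((\<lambda>x. exp (- 2 * phi t) * (Aint phi t - Aint phi (t - x))) has_real_derivative exp (2 * Rrev t phi x)) (at x within {0..t})"
      by simp
  qed
  thus ?thesis by (simp add: Aint_def[of "Rrev t phi"])
qed


lemma Tcal_TTz:
  assumes "continuous_on {0..t} phi" "t > 0" "s \<in> {0..t}"
  shows "Tcal t (TTz t z phi) s = TTz t (2 * phi t - z) phi s"
proof -
  have "TTz t z phi t = phi t - z" using TTz_at_t[OF assms(1,2)] .
  hence h: "2 * TTz t z phi t = 2 * (phi t - z)" by simp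
  show ?thesis unfolding Tcal_def h using TTz_comp[OF assms, of "2 * (phi t - z)" z]
    by (simp add: algebra_simps)
qed

lemma part_v:
  assumes "continuous_on {0..t} phi" "t > 0" "s \<in> {0..t}" "phi 0 = 0"
  shows "Rrev t (Tcal t phi) s = Tcal t (Rrev t phi) s"
proof -
  define p where "p = phi t"
  define a where "a = Aint phi t"
  define r where "r = Aint phi (t - s) / a"
  define E where "E = exp (2 * p)"
  have a: "a > 0" using Aint_t_pos[OF assms(1,2)] a_def by simp
  have E: "E > 0" by (simp add: E_def)
  have ts: "t - s \<in> {0..t}" using assms by auto
  have L1: "1 + r * (E - 1) > 0" using L_pos[OF assms(1,2) ts, of "2 * p"] by (simp add: r_def a_def E_def)
  have lhs: "Rrev t (Tcal t phi) s = phi (t - s) - ln (1 + r * (E - 1)) + p"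
    using TTz_at_t[OF assms(1,2), of "2 * phi t"]
    by (simp add: Rrev_def Tcal_def TTz_def r_def a_def E_def p_def)
  have Rt: "Rrev t phi t = - p" using assms(4) by (simp add: Rrev_def p_def)
  have ARs: "Aint (Rrev t phi) s = exp (- 2 * p) * (a - r * a)"
    using Rrev_Aint[OF assms(1,2,3)] a by (simp add: p_def a_def r_def)
  have ARt: "Aint (Rrev t phi) t = exp (- 2 * p) * a"
    using Rrev_Aint[OF assms(1,2), of t] assms(2) by (simp add: p_def a_def Aint0)
  have q: "Aint (Rrev t phi) s / Aint (Rrev t phi) t = 1 - r"
    unfolding ARs ARt using a by (simp add: field_simps)
  have e2: "exp (2 * Rrev t phi t) = 1 / E" unfolding Rt E_def by (simp add: exp_minus field_simps)
  have L2: "1 + (1 - r) * (1 / E - 1) = (1 + r * (E - 1)) / E"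
    using E by (simp add: field_simps)
  have rhs: "Tcal t (Rrev t phi) s = phi (t - s) - p - (ln (1 + r * (E - 1)) - 2 * p)"
    unfolding Tcal_def TTz_def q e2 L2 using L1 E
    by (simp add: ln_div Rrev_def p_def E_def)
  show ?thesis using lhs rhs by simp
qed

theorem proposition2p2:
  fixes t :: real
  assumes "t > 0"
  shows
    "(\<forall>phi. continuous_on {0..t} phi \<longrightarrow> Tcal t phi t = - phi t)
   \<and> (\<forall>phi. continuous_on {0..t} phi \<longrightarrow>
        (\<forall>s\<in>{0<..t}. 1 / Aint (Tcal t phi) s
            = 1 / Aint phi s + (exp (2 * phi t) - 1) / Aint phi t)
        \<and> Aint (Tcal t phi) t = exp (- 2 * phi t) * Aint phi t)
   \<and> (\<forall>phi. continuous_on {0..t} phi \<longrightarrow>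
        (\<forall>s\<in>{0..t}. Zf (Tcal t phi) s = Zf phi s))
   \<and> (\<forall>z phi. continuous_on {0..t} phi \<longrightarrow>
        (\<forall>s\<in>{0..t}. (Tcal t \<circ> TTz t z \<circ> Tcal t \<circ> TTz t z) phi s = phi s))
   \<and> (\<forall>phi. continuous_on {0..t} phi \<longrightarrow>
        (\<forall>s\<in>{0..t}. (Tcal t \<circ> Tcal t) phi s = phi s))
   \<and> (\<forall>z phi. continuous_on {0..t} phi \<longrightarrow>
        (\<forall>s\<in>{0..t}. (Tcal t \<circ> TTz t z) phi s = TTz t (2 * phi t - z) phi s))
   \<and> (\<forall>phi. continuous_on {0..t} phi \<longrightarrow> phi 0 = 0 \<longrightarrow>
        (\<forall>s\<in>{0..t}. (Rrev t \<circ> Tcal t) phi s = (Tcal t \<circ> Rrev t) phi s))"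
proof (intro conjI allI impI ballI)
  fix phi :: "real \<Rightarrow> real" assume c: "continuous_on {0..t} phi"
  show "Tcal t phi t = - phi t" using TTz_at_t[OF c assms] by (simp add: Tcal_def)
next
  fix phi :: "real \<Rightarrow> real" and s assume c: "continuous_on {0..t} phi" and s: "s \<in> {0<..t}"
  have s': "s \<in> {0..t}" using s by auto
  have As: "Aint phi s > 0" using Aint_strict[OF c, of 0 s] s by (auto simp: Aint0)
  have at: "Aint phi t > 0" using Aint_t_pos[OF c assms] .
  have L: "1 + Aint phi s / Aint phi t * (exp (2 * phi t) - 1) > 0" using L_pos[OF c assms s'] .
  show "1 / Aint (Tcal t phi) s = 1 / Aint phi s + (exp (2 * phi t) - 1) / Aint phi t"
    unfolding Tcal_def TTz_Aint[OF c assms s'] using As at L by (simp add: field_simps)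
next
  fix phi :: "real \<Rightarrow> real" assume c: "continuous_on {0..t} phi"
  have at: "Aint phi t > 0" using Aint_t_pos[OF c assms] .
  have tt: "t \<in> {0..t}" using assms by simp
  show "Aint (Tcal t phi) t = exp (- 2 * phi t) * Aint phi t"
    unfolding Tcal_def TTz_Aint[OF c assms tt] using at assms by (simp add: exp_minus field_simps)
next
  fix phi :: "real \<Rightarrow> real" and s assume c: "continuous_on {0..t} phi" and s: "s \<in> {0..t}"
  show "Zf (Tcal t phi) s = Zf phi s" unfolding Tcal_def using Zf_TTz[OF c assms s] .
next
  fix phi :: "real \<Rightarrow> real" and s assume c: "continuous_on {0..t} phi" and s: "s \<in> {0..t}"
  show "(Tcal t \<circ> Tcal t) phi s = phi s"
    using Tcal_TTz[OF c assms s, of "2 * phi t"]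
    by (simp add: Tcal_def[of t phi] TTz_zero)
next
  fix z and phi :: "real \<Rightarrow> real" and s assume c: "continuous_on {0..t} phi" and s: "s \<in> {0..t}"
  show "(Tcal t \<circ> TTz t z) phi s = TTz t (2 * phi t - z) phi s"
    using Tcal_TTz[OF c assms s] by simp
next
  fix phi :: "real \<Rightarrow> real" and s assume c: "continuous_on {0..t} phi" "phi 0 = 0" and s: "s \<in> {0..t}"
  show "(Rrev t \<circ> Tcal t) phi s = (Tcal t \<circ> Rrev t) phi s"
    using part_v[OF c(1) assms s c(2)] by simp
next
  fix z and phi :: "real \<Rightarrow> real" and s assume c: "continuous_on {0..t} phi" and s: "s \<in> {0..t}"
  define chi where "chi = Tcal t (TTz t z phi)"
  have cc: "continuous_on {0..t} chi"
    unfolding chi_def Tcal_def by (intro TTz_cont TTz_cont c assms)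
  have eq: "\<forall>x\<in>{0..t}. chi x = TTz t (2 * phi t - z) phi x"
    using Tcal_TTz[OF c assms] by (simp add: chi_def)
  have cht: "chi t = z - phi t"
    using eq TTz_at_t[OF c assms] assms by simp
  have "Tcal t (TTz t z chi) s = TTz t (2 * chi t - z) chi s"
    using Tcal_TTz[OF cc assms s] .
  also have "\<dots> = TTz t (2 * chi t - z) (TTz t (2 * phi t - z) phi) s"
    by (rule TTz_cong[OF eq s])
  also have "\<dots> = TTz t 0 phi s"
  proof -
    have "2 * chi t - z + (2 * phi t - z) = 0" using cht by simp
    thus ?thesis using TTz_comp[OF c assms s, of "2 * chi t - z" "2 * phi t - z"] by (simp add: add.commute)
  qed
  also have "\<dots> = phi s" by (rule TTz_zero)
  finally show "(Tcal t \<circ> TTz t z \<circ> Tcal t \<circ> TTz t z) phi s = phi s"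
    by (simp add: chi_def)
qed

end
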